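(* Let $X_{\Omega_-}$ and $X_{\Omega_+}$ be concave toric domains in $\mathbb{R}^4$. Suppose that for every pair of relatively prime positive integers $a,b>0$ we have $[(a,b)]_{\Omega_-}\le[(a,b)]_{\Omega_+}$. Then $\Omega_-\subset\Omega_+$.
   Context: Let $\mu:\mathbb{C}^2\to\mathbb{R}^2_{\ge0}$, $\mu(z_1,z_2)=(\pi|z_1|^2,\pi|z_2|^2)$. Let $\Omega\subset\mathbb{R}^2_{\ge0}$ be compact with $0\in\operatorname{int}(\Omega)$, whose boundary consists of the segment from $(0,0)$ to $(a(\Omega),0)$, the segment from $(0,0)$ to $(0,b(\Omega))$ (with $a(\Omega),b(\Omega)>0$), and a continuous curve $\partial_+\Omega$ from $(a(\Omega),0)$ to $(0,b(\Omega))$ meeting the axes only at its endpoints. $X_\Omega=\mu^{-1}(\Omega)$ is a concave toric domain if $\mathbb{R}^2_{\ge0}\setminus\Omega$ is convex. For $(a,b)\in\mathbb{Z}^2_{\ge0}$, $[(a,b)]_\Omega=\min\{ax+by:(x,y)\in\partial_+\Omega\}$ (in the paper this quantity is the $\Omega$-action $\mathcal{A}_\Omega(e_{a,b})$). *)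

theory Defs
  imports "HOL-Analysis.Analysis"
begin

definition quadrant :: "(real \<times> real) set" where
  "quadrant = {p. fst p \<ge> 0 \<and> snd p \<ge> 0}"

definition toric_region :: "(real \<times> real) set \<Rightarrow> bool" where
  "toric_region \<Omega> \<longleftrightarrow>
     compact \<Omega> \<and> \<Omega> \<subseteq> quadrant \<and>
     (\<exists>e>0. ball (0,0) e \<inter> quadrant \<subseteq> \<Omega>) \<and>
     (\<exists>a b \<gamma>. a > 0 \<and> b > 0 \<and> path \<gamma> \<and>
        pathstart \<gamma> = (a, 0) \<and> pathfinish \<gamma> = (0, b) \<and>
        (\<forall>t\<in>{0<..<1}. fst (\<gamma> t) > 0 \<and> snd (\<gamma> t) > 0) \<and>
        frontier \<Omega> = closed_segment (0,0) (a,0) \<union> closed_segment (0,0) (0,b)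
                        \<union> path_image \<gamma>)"

definition concave_toric_region :: "(real \<times> real) set \<Rightarrow> bool" where
  "concave_toric_region \<Omega> \<longleftrightarrow> toric_region \<Omega> \<and> convex (quadrant - \<Omega>)"

text \<open>The curve part \<partial>_+\<Omega> of the boundary: the closure of the part of the frontier
  lying in the open quadrant (for admissible \<Omega> this is exactly the image of the curve).\<close>

definition plus_boundary :: "(real \<times> real) set \<Rightarrow> (real \<times> real) set" where
  "plus_boundary \<Omega> = closure (frontier \<Omega> \<inter> {p. fst p > 0 \<and> snd p > 0})"

definition omega_action :: "(real \<times> real) set \<Rightarrow> nat \<Rightarrow> nat \<Rightarrow> real" where
  "omega_action \<Omega> a b = Inf ((\<lambda>p. real a * fst p + real b * snd p) ` plus_boundary \<Omega>)"

end

theory Submission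
  imports Defs
begin

lemma quadrant_iff: "p \<in> quadrant \<longleftrightarrow> fst p \<ge> 0 \<and> snd p \<ge> 0"
  by (simp add: quadrant_def)

lemma upset:
  assumes c: "concave_toric_region \<Omega>" and z: "z \<in> quadrant" "z \<notin> \<Omega>"
    and d: "fst d \<ge> 0" "snd d \<ge> 0"
  shows "z + d \<notin> \<Omega>"
proof (cases "d = 0")
  case True then show ?thesis using z by simp
next
  case False
  have cv: "convex (quadrant - \<Omega>)" and tr: "toric_region \<Omega>"
    using c by (auto simp: concave_toric_region_def)
  then have "bounded \<Omega>" by (auto simp: toric_region_def compact_imp_bounded)
  then obtain R where R: "R > 0" "\<And>x. x \<in> \<Omega> \<Longrightarrow> norm x \<le> R"
    by (auto simp: bounded_pos)
  have nd: "norm d > 0" using False by simp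
  define L where "L = max 1 ((R + norm z + 1) / norm d)"
  have L1: "L \<ge> 1" by (simp add: L_def)
  have "L * norm d \<ge> R + norm z + 1"
    using nd by (simp add: L_def field_simps max_def)
  define y where "y = z + L *\<^sub>R d"
  have "norm y \<ge> L * norm d - norm z"
    using norm_triangle_ineq2[of "L *\<^sub>R d" "-z"] L1 by (simp add: y_def add.commute)
  then have "norm y > R" using \<open>L * norm d \<ge> R + norm z + 1\<close> by linarith
  then have yO: "y \<notin> \<Omega>" using R(2)[of y] by linarith
  have yQ: "y \<in> quadrant" using z d L1 by (simp add: quadrant_iff y_def)
  have eq: "z + d = (1 - 1/L) *\<^sub>R z + (1/L) *\<^sub>R y"
    using L1 by (simp add: y_def algebra_simps)
  have "(1 - 1/L) *\<^sub>R z + (1/L) *\<^sub>R y \<in> quadrant - \<Omega>"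
    using cv[unfolded convex_def] z yQ yO L1 by auto
  then show ?thesis using eq by simp
qed

lemma notcl:
  assumes c: "concave_toric_region \<Omega>" and p: "p \<in> \<Omega>" "fst p > 0" "snd p > 0"
    and s: "0 \<le> s" "s < 1"
  shows "s *\<^sub>R p \<notin> closure (quadrant - \<Omega>)"
proof
  assume "s *\<^sub>R p \<in> closure (quadrant - \<Omega>)"
  moreover have "min ((1-s) * fst p) ((1-s) * snd p) > 0" using p s by simp
  ultimately obtain z where z: "z \<in> quadrant - \<Omega>"
    "dist z (s *\<^sub>R p) < min ((1-s) * fst p) ((1-s) * snd p)"
    unfolding closure_approachable by blast
  have "dist (fst z) (fst (s *\<^sub>R p)) \<le> dist z (s *\<^sub>R p)" by (rule dist_fst_le)
  then have zx: "fst z \<le> fst p" using z(2) by (simp add: dist_real_def algebra_simps abs_if split: if_splits)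
  have "dist (snd z) (snd (s *\<^sub>R p)) \<le> dist z (s *\<^sub>R p)" by (rule dist_snd_le)
  then have zy: "snd z \<le> snd p" using z(2) by (simp add: dist_real_def algebra_simps abs_if split: if_splits)
  have "z + (p - z) \<notin> \<Omega>"
    by (rule upset[OF c]) (use z zx zy in auto)
  then show False using p by simp
qed

lemma pb_sub_frontier: "plus_boundary \<Omega> \<subseteq> frontier \<Omega>"
  unfolding plus_boundary_def
  by (metis frontier_closed closure_minimal inf.cobounded1)

lemma pb_quadrant:
  assumes "toric_region \<Omega>"
  shows "plus_boundary \<Omega> \<subseteq> quadrant"
proof -
  have "closed \<Omega>" "\<Omega> \<subseteq> quadrant" using assms by (auto simp: toric_region_def compact_imp_closed)
  then show ?thesis using pb_sub_frontier[of \<Omega>] frontier_subset_closed[of \<Omega>] by blast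
qed

lemma openQ: "open {p::real\<times>real. fst p > 0 \<and> snd p > 0}"
  by (intro open_Collect_conj open_Collect_less continuous_intros)

lemma pb_sub_cl:
  shows "plus_boundary \<Omega> \<subseteq> closure (quadrant - \<Omega>)"
proof -
  let ?O = "{p::real\<times>real. fst p > 0 \<and> snd p > 0}"
  have "frontier \<Omega> \<inter> ?O \<subseteq> ?O \<inter> closure (- \<Omega>)"
    by (auto simp: frontier_def closure_interior)
  also have "\<dots> \<subseteq> closure (?O \<inter> - \<Omega>)" by (rule open_Int_closure_subset[OF openQ])
  also have "\<dots> \<subseteq> closure (quadrant - \<Omega>)" by (rule closure_mono) (auto simp: quadrant_def)
  finally show ?thesis unfolding plus_boundary_def
    by (metis closed_closure closure_minimal)
qed

lemma pb_nonempty: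
  assumes "toric_region \<Omega>"
  shows "plus_boundary \<Omega> \<noteq> {}"
proof -
  obtain a b \<gamma> where g: "\<forall>t\<in>{0<..<1}. fst (\<gamma> t) > 0 \<and> snd (\<gamma> t) > 0"
    "frontier \<Omega> = closed_segment (0,0) (a,0) \<union> closed_segment (0,0) (0,b) \<union> path_image \<gamma>"
    using assms unfolding toric_region_def by blast
  have "\<gamma> (1/2) \<in> path_image \<gamma>" by (simp add: path_image_def)
  moreover have "fst (\<gamma> (1/2)) > 0 \<and> snd (\<gamma> (1/2)) > 0" using g(1) by auto
  ultimately have "\<gamma> (1/2) \<in> frontier \<Omega> \<inter> {p. fst p > 0 \<and> snd p > 0}" using g(2) by auto
  then show ?thesis unfolding plus_boundary_def using closure_subset by blast
qed

lemma exit_pt: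
  assumes tr: "toric_region \<Omega>" and p: "fst p > 0" "snd p > 0" "p \<notin> \<Omega>"
  shows "\<exists>t. 0 < t \<and> t < 1 \<and> t *\<^sub>R p \<in> plus_boundary \<Omega>"
proof -
  have cl: "closed \<Omega>" using tr by (auto simp: toric_region_def compact_imp_closed)
  obtain e where e: "e > 0" "ball (0,0) e \<inter> quadrant \<subseteq> \<Omega>"
    using tr unfolding toric_region_def by blast
  have np: "norm p > 0" using p by auto
  define T where "T = {0..1} \<inter> (\<lambda>t. t *\<^sub>R p) -` \<Omega>"
  have "closed ((\<lambda>t. t *\<^sub>R p) -` \<Omega>)"
    by (rule continuous_closed_vimage[OF cl]) (intro continuous_intros)
  then have cT: "closed T" unfolding T_def by (intro closed_Int) auto
  have bT: "bdd_above T" unfolding T_def by (auto intro: bdd_aboveI[of _ 1])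
  define t1 where "t1 = min (1/2) (e / (2 * norm p))"
  have t1a: "t1 > 0" using e np by (simp add: t1_def)
  have t1b: "t1 \<le> 1/2" by (simp add: t1_def)
  have "t1 \<le> e / (2 * norm p)" by (simp add: t1_def)
  then have "t1 * norm p \<le> e / (2 * norm p) * norm p" using np by (intro mult_right_mono) auto
  also have "\<dots> = e/2" using np by simp
  finally have t1: "t1 > 0" "t1 \<le> 1/2" "t1 * norm p \<le> e/2" using t1a t1b by auto
  have z0: "(0::real, 0::real) = 0" by (simp add: zero_prod_def)
  have "norm (t1 *\<^sub>R p) = t1 * norm p" using t1 by simp
  then have "t1 *\<^sub>R p \<in> ball 0 e" using t1 e by (simp add: mem_ball dist_0_norm)
  then have "t1 *\<^sub>R p \<in> ball (0,0) e" unfolding z0 .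
  moreover have "t1 *\<^sub>R p \<in> quadrant" using t1 p by (simp add: quadrant_iff)
  ultimately have t1T: "t1 \<in> T" using e(2) t1 by (auto simp: T_def)
  then have neT: "T \<noteq> {}" by auto
  define t0 where "t0 = Sup T"
  have t0T: "t0 \<in> T" unfolding t0_def by (rule closed_contains_Sup[OF neT bT cT])
  have "t1 \<le> t0" unfolding t0_def by (rule cSup_upper[OF t1T bT])
  then have t0pos: "t0 > 0" using t1 by simp
  have t0le: "t0 \<le> 1" using t0T by (simp add: T_def)
  have "t0 \<noteq> 1" using t0T p(3) by (auto simp: T_def)
  then have t0lt: "t0 < 1" using t0le by simp
  have inO: "t0 *\<^sub>R p \<in> \<Omega>" using t0T by (simp add: T_def)
  have "t0 *\<^sub>R p \<in> frontier \<Omega>"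
    unfolding frontier_straddle
  proof (intro allI impI conjI)
    fix \<epsilon> :: real assume \<epsilon>: "\<epsilon> > 0"
    show "\<exists>x\<in>\<Omega>. dist (t0 *\<^sub>R p) x < \<epsilon>" using inO \<epsilon> by (intro bexI[of _ "t0 *\<^sub>R p"]) auto
    define t where "t = min 1 (t0 + \<epsilon> / (2 * norm p))"
    have "\<epsilon> / (2 * norm p) > 0" using \<epsilon> np by simp
    then have tt1: "t > t0" using t0lt by (simp add: t_def)
    have tt2: "t \<le> 1" by (simp add: t_def)
    have "t - t0 \<le> \<epsilon> / (2 * norm p)" by (simp add: t_def)
    then have "(t - t0) * norm p \<le> \<epsilon> / (2 * norm p) * norm p" using np by (intro mult_right_mono) auto
    also have "\<dots> = \<epsilon>/2" using np by simp
    finally have tt: "t > t0" "t \<le> 1" "(t - t0) * norm p \<le> \<epsilon>/2" using tt1 tt2 by auto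
    have "t \<notin> T"
    proof
      assume "t \<in> T"
      then have "t \<le> t0" unfolding t0_def by (rule cSup_upper[OF _ bT])
      then show False using tt by simp
    qed
    then have "t *\<^sub>R p \<notin> \<Omega>" using tt t0pos by (auto simp: T_def)
    moreover have "dist (t0 *\<^sub>R p) (t *\<^sub>R p) < \<epsilon>"
    proof -
      have "dist (t0 *\<^sub>R p) (t *\<^sub>R p) = norm ((t - t0) *\<^sub>R p)"
        by (simp add: dist_norm norm_minus_commute scaleR_diff_left)
      also have "\<dots> = (t - t0) * norm p" using tt by simp
      finally show ?thesis using tt \<epsilon> by linarith
    qed
    ultimately show "\<exists>x. x \<notin> \<Omega> \<and> dist (t0 *\<^sub>R p) x < \<epsilon>" by blast
  qed
  moreover have "fst (t0 *\<^sub>R p) > 0 \<and> snd (t0 *\<^sub>R p) > 0" using t0pos p by simp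
  ultimately have "t0 *\<^sub>R p \<in> frontier \<Omega> \<inter> {p. fst p > 0 \<and> snd p > 0}" by simp
  then have "t0 *\<^sub>R p \<in> plus_boundary \<Omega>"
    unfolding plus_boundary_def by (rule subsetD[OF closure_subset])
  then show ?thesis using t0pos t0lt by blast
qed

lemma reduce_coprime:
  fixes a b :: nat
  assumes ab: "a > 0" "b > 0"
    and S: "\<forall>c\<in>S. real a * fst c + real b * snd c \<ge> K"
    and r: "real a * fst r + real b * snd r < K"
  shows "\<exists>a' b' K'. a' > 0 \<and> b' > 0 \<and> coprime a' b' \<and>
     (\<forall>c\<in>S. real a' * fst c + real b' * snd c \<ge> K') \<and> real a' * fst r + real b' * snd r < K'"
proof -
  define G where "G = gcd a b"
  have G0: "G > 0" using ab by (simp add: G_def)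
  define a' where "a' = a div G"
  define b' where "b' = b div G"
  have ea: "a = G * a'" unfolding a'_def G_def by simp
  have eb: "b = G * b'" unfolding b'_def G_def by simp
  have a'0: "a' > 0" using ab ea by (cases "a' = 0") auto
  have b'0: "b' > 0" using ab eb by (cases "b' = 0") auto
  have cop: "coprime a' b'" unfolding a'_def b'_def G_def using ab by (intro div_gcd_coprime) auto
  have rG: "real G > 0" using G0 by simp
  have "\<forall>c\<in>S. real a' * fst c + real b' * snd c \<ge> K / real G"
  proof
    fix c assume "c \<in> S"
    then have "real G * (real a' * fst c + real b' * snd c) \<ge> K"
      using S ea eb by (simp add: algebra_simps)
    then show "real a' * fst c + real b' * snd c \<ge> K / real G"
      using rG by (simp add: divide_le_eq mult.commute)
  qed
  moreover have "real a' * fst r + real b' * snd r < K / real G"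
  proof -
    have "real G * (real a' * fst r + real b' * snd r) < K"
      using r ea eb by (simp add: algebra_simps)
    then show ?thesis using rG by (simp add: less_divide_eq mult.commute)
  qed
  ultimately show ?thesis using a'0 b'0 cop by blast
qed

lemma weight_nonneg:
  assumes tr: "toric_region \<Omega>"
    and sep: "\<forall>x\<in>closure (quadrant - \<Omega>). \<beta> < w1 * fst x + w2 * snd x"
  shows "w1 \<ge> 0"
proof (rule ccontr)
  assume "\<not> w1 \<ge> 0"
  then have w: "w1 < 0" by simp
  have "bounded \<Omega>" using tr by (auto simp: toric_region_def compact_imp_bounded)
  then obtain R where R: "R > 0" "\<And>x. x \<in> \<Omega> \<Longrightarrow> norm x \<le> R"
    by (auto simp: bounded_pos)
  define L where "L = max (R+1) ((\<bar>\<beta>\<bar>+1)/(-w1))"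
  have L: "L \<ge> R + 1" "L \<ge> (\<bar>\<beta>\<bar>+1)/(-w1)" by (auto simp: L_def)
  have "norm L \<le> norm (L, 0::real)" by (rule norm_fst_le)
  then have "(L, 0::real) \<notin> \<Omega>" using R(2)[of "(L,0)"] L by auto
  moreover have "(L, 0::real) \<in> quadrant" using L R by (simp add: quadrant_iff)
  ultimately have "(L, 0::real) \<in> closure (quadrant - \<Omega>)" using closure_subset by blast
  then have b1: "\<beta> < w1 * L" using sep by auto
  have b2: "w1 * L \<le> w1 * ((\<bar>\<beta>\<bar>+1)/(-w1))" using L(2) w by (intro mult_left_mono_neg) auto
  have b3: "w1 * ((\<bar>\<beta>\<bar>+1)/(-w1)) = -(\<bar>\<beta>\<bar>+1)" using w by simp
  have "\<beta> < -(\<bar>\<beta>\<bar>+1)" using less_le_trans[OF b1 b2] unfolding b3 .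
  then show False by simp
qed


lemma weight_nonneg2:
  assumes tr: "toric_region \<Omega>"
    and sep: "\<forall>x\<in>closure (quadrant - \<Omega>). \<beta> < w1 * fst x + w2 * snd x"
  shows "w2 \<ge> 0"
proof (rule ccontr)
  assume "\<not> w2 \<ge> 0"
  then have w: "w2 < 0" by simp
  have "bounded \<Omega>" using tr by (auto simp: toric_region_def compact_imp_bounded)
  then obtain R where R: "R > 0" "\<And>x. x \<in> \<Omega> \<Longrightarrow> norm x \<le> R"
    by (auto simp: bounded_pos)
  define L where "L = max (R+1) ((\<bar>\<beta>\<bar>+1)/(-w2))"
  have L: "L \<ge> R + 1" "L \<ge> (\<bar>\<beta>\<bar>+1)/(-w2)" by (auto simp: L_def)
  have "norm L \<le> norm (0::real, L)" by (rule norm_snd_le)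
  then have "(0::real, L) \<notin> \<Omega>" using R(2)[of "(0,L)"] L by auto
  moreover have "(0::real, L) \<in> quadrant" using L R by (simp add: quadrant_iff)
  ultimately have "(0::real, L) \<in> closure (quadrant - \<Omega>)" using closure_subset by blast
  then have b1: "\<beta> < w2 * L" using sep by auto
  have b2: "w2 * L \<le> w2 * ((\<bar>\<beta>\<bar>+1)/(-w2))" using L(2) w by (intro mult_left_mono_neg) auto
  have b3: "w2 * ((\<bar>\<beta>\<bar>+1)/(-w2)) = -(\<bar>\<beta>\<bar>+1)" using w by simp
  have "\<beta> < -(\<bar>\<beta>\<bar>+1)" using less_le_trans[OF b1 b2] unfolding b3 .
  then show False by simp
qed

lemma main_open:
  assumes cm: "concave_toric_region \<Omega>m" and cp: "concave_toric_region \<Omega>p"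
    and H: "\<And>a b :: nat. a > 0 \<Longrightarrow> b > 0 \<Longrightarrow> coprime a b \<Longrightarrow>
           omega_action \<Omega>m a b \<le> omega_action \<Omega>p a b"
    and p: "p \<in> \<Omega>m" "fst p > 0" "snd p > 0"
  shows "p \<in> \<Omega>p"
proof (rule ccontr)
  assume pn: "p \<notin> \<Omega>p"
  have trm: "toric_region \<Omega>m" and trp: "toric_region \<Omega>p"
    using cm cp by (auto simp: concave_toric_region_def)
  obtain t where t: "0 < t" "t < 1" and rP: "t *\<^sub>R p \<in> plus_boundary \<Omega>p"
    using exit_pt[OF trp p(2,3) pn] by blast
  define r where "r = t *\<^sub>R p"
  have rP': "r \<in> plus_boundary \<Omega>p" using rP by (simp add: r_def)
  have r0: "fst r \<ge> 0" "snd r \<ge> 0" using t p by (auto simp: r_def)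
  let ?C = "closure (quadrant - \<Omega>m)"
  have rn: "r \<notin> ?C" unfolding r_def by (rule notcl[OF cm p]) (use t in auto)
  have cvC: "convex ?C" using cm by (intro convex_closure) (simp add: concave_toric_region_def)
  obtain w \<beta> where sep: "inner w r < \<beta>" "\<forall>x\<in>?C. \<beta> < inner w x"
    using separating_hyperplane_closed_point[OF cvC closed_closure rn] by blast
  obtain w1 w2 where w: "w = (w1, w2)" by (cases w)
  have inn: "\<And>x. inner w x = w1 * fst x + w2 * snd x" by (simp add: w inner_prod_def)
  have sep2: "\<forall>x\<in>?C. \<beta> < w1 * fst x + w2 * snd x" using sep(2) by (simp add: inn)
  have w1: "w1 \<ge> 0" by (rule weight_nonneg[OF trm sep2])
  have w2: "w2 \<ge> 0" by (rule weight_nonneg2[OF trm sep2])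
  define g where "g = \<beta> - (w1 * fst r + w2 * snd r)"
  have g: "g > 0" using sep(1) by (simp add: g_def inn)
  obtain n :: nat where n: "(fst r + snd r) / g < real n" using reals_Archimedean2 by blast
  define N :: nat where "N = n + 1"
  have N: "real N * g > fst r + snd r"
    using n g by (simp add: N_def pos_divide_less_eq mult.commute distrib_left)
  have N1: "real N \<ge> 1" by (simp add: N_def)
  define a :: nat where "a = nat \<lfloor>real N * w1\<rfloor> + 1"
  define b :: nat where "b = nat \<lfloor>real N * w2\<rfloor> + 1"
  have Nw1: "real N * w1 \<ge> 0" and Nw2: "real N * w2 \<ge> 0" using w1 w2 by auto
  have ra: "real a = of_int \<lfloor>real N * w1\<rfloor> + 1" using Nw1 by (simp add: a_def)
  have rb: "real b = of_int \<lfloor>real N * w2\<rfloor> + 1" using Nw2 by (simp add: b_def)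
  have a1: "real a \<ge> real N * w1" "real a \<le> real N * w1 + 1" unfolding ra
    by (linarith, linarith)
  have b1: "real b \<ge> real N * w2" "real b \<le> real N * w2 + 1" unfolding rb
    by (linarith, linarith)
  have lowc: "\<forall>c\<in>plus_boundary \<Omega>m. real a * fst c + real b * snd c \<ge> real N * \<beta>"
  proof
    fix c assume c: "c \<in> plus_boundary \<Omega>m"
    then have cq: "fst c \<ge> 0" "snd c \<ge> 0" using pb_quadrant[OF trm] by (auto simp: quadrant_iff)
    have "\<beta> < w1 * fst c + w2 * snd c" using sep2 pb_sub_cl c by blast
    then have "real N * \<beta> \<le> real N * (w1 * fst c + w2 * snd c)" using N1 by simp
    also have "\<dots> = (real N * w1) * fst c + (real N * w2) * snd c" by (simp add: algebra_simps)
    also have "\<dots> \<le> real a * fst c + real b * snd c"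
      using a1(1) b1(1) cq by (intro add_mono mult_right_mono) auto
    finally show "real a * fst c + real b * snd c \<ge> real N * \<beta>" .
  qed
  have "real a * fst r + real b * snd r \<le> (real N * w1 + 1) * fst r + (real N * w2 + 1) * snd r"
    using a1(2) b1(2) r0 by (intro add_mono mult_right_mono) auto
  also have "\<dots> = real N * (w1 * fst r + w2 * snd r) + (fst r + snd r)" by (simp add: algebra_simps)
  also have "\<dots> < real N * (w1 * fst r + w2 * snd r) + real N * g" using N by simp
  also have "\<dots> = real N * \<beta>" by (simp add: g_def algebra_simps)
  finally have upr: "real a * fst r + real b * snd r < real N * \<beta>" .
  obtain a' b' K where ab': "a' > 0" "b' > 0" "coprime a' b'"
    and lo: "\<forall>c\<in>plus_boundary \<Omega>m. real a' * fst c + real b' * snd c \<ge> K"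
    and up: "real a' * fst r + real b' * snd r < K"
    using reduce_coprime[of a b "plus_boundary \<Omega>m" "real N * \<beta>" r] lowc upr
    by (auto simp: a_def b_def)
  have "omega_action \<Omega>m a' b' \<ge> K"
    unfolding omega_action_def
    by (rule cInf_greatest) (use lo pb_nonempty[OF trm] in auto)
  moreover have "omega_action \<Omega>p a' b' \<le> real a' * fst r + real b' * snd r"
    unfolding omega_action_def
  proof (rule cInf_lower)
    show "real a' * fst r + real b' * snd r \<in> (\<lambda>p. real a' * fst p + real b' * snd p) ` plus_boundary \<Omega>p"
      using rP' by blast
    show "bdd_below ((\<lambda>p. real a' * fst p + real b' * snd p) ` plus_boundary \<Omega>p)"
      by (rule bdd_belowI[of _ 0]) (use pb_quadrant[OF trp] in \<open>auto simp: quadrant_iff\<close>)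
  qed
  moreover have "omega_action \<Omega>m a' b' \<le> omega_action \<Omega>p a' b'" using H ab' by blast
  ultimately show False using up by linarith
qed

lemma near_end:
  assumes cm: "concave_toric_region \<Omega>m" and cp: "concave_toric_region \<Omega>p"
    and H: "\<And>a b :: nat. a > 0 \<Longrightarrow> b > 0 \<Longrightarrow> coprime a b \<Longrightarrow>
           omega_action \<Omega>m a b \<le> omega_action \<Omega>p a b"
    and g: "path \<gamma>" "\<forall>t\<in>{0<..<1}. fst (\<gamma> t) > 0 \<and> snd (\<gamma> t) > 0"
       "path_image \<gamma> \<subseteq> \<Omega>m" "\<gamma> 0 \<notin> \<Omega>p"
  shows False
proof -
  have "closed \<Omega>p" using cp by (auto simp: concave_toric_region_def toric_region_def compact_imp_closed)
  then have "open (- \<Omega>p)" by auto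
  then obtain e where e: "e > 0" "ball (\<gamma> 0) e \<subseteq> - \<Omega>p"
    using g(4) open_contains_ball_eq by blast
  have "continuous_on {0..1} \<gamma>" using g(1) by (simp add: path_def)
  then obtain d where d: "d > 0" "\<forall>x'\<in>{0..1}. dist x' 0 < d \<longrightarrow> dist (\<gamma> x') (\<gamma> 0) < e"
    using e(1) unfolding continuous_on_iff by (meson atLeastAtMost_iff order_refl zero_le_one)
  define s :: real where "s = min (1/2) (d/2)"
  have s: "0 < s" "s < 1" "dist s 0 < d" using d by (auto simp: s_def dist_real_def)
  have "dist (\<gamma> s) (\<gamma> 0) < e" using d(2) s by auto
  then have "\<gamma> s \<in> ball (\<gamma> 0) e" by (simp add: mem_ball dist_commute)
  then have "\<gamma> s \<notin> \<Omega>p" using e(2) by blast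
  moreover have "\<gamma> s \<in> \<Omega>m" using g(3) s by (auto simp: path_image_def)
  moreover have "fst (\<gamma> s) > 0" "snd (\<gamma> s) > 0" using g(2) s by auto
  ultimately show False using main_open[OF cm cp H] by blast
qed

lemma axis_x:
  assumes tr: "toric_region \<Omega>" and a: "a > 0" and b: "b > 0"
    and g: "pathstart \<gamma> = (a, 0)" "pathfinish \<gamma> = (0, b)"
       "\<forall>t\<in>{0<..<1}. fst (\<gamma> t) > 0 \<and> snd (\<gamma> t) > 0"
       "frontier \<Omega> = closed_segment (0,0) (a,0) \<union> closed_segment (0,0) (0,b) \<union> path_image \<gamma>"
    and x: "(x, 0) \<in> \<Omega>" "x > 0"
  shows "x \<le> a"
proof -
  have Q: "\<Omega> \<subseteq> quadrant" using tr by (simp add: toric_region_def)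
  have "(x, 0) \<in> frontier \<Omega>"
    unfolding frontier_straddle
  proof (intro allI impI conjI)
    fix \<epsilon> :: real assume \<epsilon>: "\<epsilon> > 0"
    show "\<exists>y\<in>\<Omega>. dist (x, 0) y < \<epsilon>" using x \<epsilon> by (intro bexI[of _ "(x,0)"]) auto
    have "(x, -\<epsilon>/2) \<notin> \<Omega>" using Q \<epsilon> by (auto simp: quadrant_def)
    moreover have "dist (x, 0) (x, -\<epsilon>/2) < \<epsilon>" using \<epsilon> by (simp add: dist_Pair_Pair dist_real_def)
    ultimately show "\<exists>y. y \<notin> \<Omega> \<and> dist (x, 0) y < \<epsilon>" by blast
  qed
  from this[unfolded g(4)] consider "(x,0::real) \<in> closed_segment (0,0) (a,0)" | "(x,0::real) \<in> closed_segment (0,0) (0,b)"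
    | "(x,0::real) \<in> path_image \<gamma>" by blast
  then show ?thesis
  proof cases
    case 1 then obtain u where "0 \<le> u" "u \<le> 1" "(x,0) = (1-u) *\<^sub>R (0,0) + u *\<^sub>R (a,(0::real))"
      unfolding in_segment by blast
    then have "x = u * a" by simp
    then show ?thesis using \<open>u \<le> 1\<close> a by (simp add: mult_left_le_one_le)
  next
    case 2 then obtain u where "(x,0) = (1-u) *\<^sub>R (0,0) + u *\<^sub>R ((0::real),b)"
      unfolding in_segment by blast
    then show ?thesis using x by simp
  next
    case 3 then obtain s where s: "s \<in> {0..1}" "\<gamma> s = (x,0)" by (auto simp: path_image_def)
    show ?thesis
    proof (cases "s = 0")
      case True then show ?thesis using s g(1) by (simp add: pathstart_def)
    next
      case False
      show ?thesis
      proof (cases "s = 1")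
        case True then show ?thesis using s g(2) x by (simp add: pathfinish_def)
      next
        case False
        then have "s \<in> {0<..<1}" using s \<open>s \<noteq> 0\<close> by auto
        then show ?thesis using g(3) s by force
      qed
    qed
  qed
qed

lemma axis_y:
  assumes tr: "toric_region \<Omega>" and a: "a > 0" and b: "b > 0"
    and g: "pathstart \<gamma> = (a, 0)" "pathfinish \<gamma> = (0, b)"
       "\<forall>t\<in>{0<..<1}. fst (\<gamma> t) > 0 \<and> snd (\<gamma> t) > 0"
       "frontier \<Omega> = closed_segment (0,0) (a,0) \<union> closed_segment (0,0) (0,b) \<union> path_image \<gamma>"
    and y: "(0, y) \<in> \<Omega>" "y > 0"
  shows "y \<le> b"
proof -
  have Q: "\<Omega> \<subseteq> quadrant" using tr by (simp add: toric_region_def)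
  have "(0, y) \<in> frontier \<Omega>"
    unfolding frontier_straddle
  proof (intro allI impI conjI)
    fix \<epsilon> :: real assume \<epsilon>: "\<epsilon> > 0"
    show "\<exists>z\<in>\<Omega>. dist (0, y) z < \<epsilon>" using y \<epsilon> by (intro bexI[of _ "(0,y)"]) auto
    have "(-\<epsilon>/2, y) \<notin> \<Omega>" using Q \<epsilon> by (auto simp: quadrant_def)
    moreover have "dist (0, y) (-\<epsilon>/2, y) < \<epsilon>" using \<epsilon> by (simp add: dist_Pair_Pair dist_real_def)
    ultimately show "\<exists>z. z \<notin> \<Omega> \<and> dist (0, y) z < \<epsilon>" by blast
  qed
  from this[unfolded g(4)] consider "(0::real,y) \<in> closed_segment (0,0) (a,0)" | "(0::real,y) \<in> closed_segment (0,0) (0,b)"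
    | "(0::real,y) \<in> path_image \<gamma>" by blast
  then show ?thesis
  proof cases
    case 2 then obtain u where "0 \<le> u" "u \<le> 1" "(0,y) = (1-u) *\<^sub>R (0,0) + u *\<^sub>R ((0::real),b)"
      unfolding in_segment by blast
    then have "y = u * b" by simp
    then show ?thesis using \<open>u \<le> 1\<close> b by (simp add: mult_left_le_one_le)
  next
    case 1 then obtain u where "(0,y) = (1-u) *\<^sub>R (0,0) + u *\<^sub>R (a,(0::real))"
      unfolding in_segment by blast
    then show ?thesis using y by simp
  next
    case 3 then obtain s where s: "s \<in> {0..1}" "\<gamma> s = (0,y)" by (auto simp: path_image_def)
    show ?thesis
    proof (cases "s = 0")
      case True then show ?thesis using s g(1) y by (simp add: pathstart_def)
    next
      case False
      show ?thesis
      proof (cases "s = 1")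
        case True then show ?thesis using s g(2) by (simp add: pathfinish_def)
      next
        case False
        then have "s \<in> {0<..<1}" using s \<open>s \<noteq> 0\<close> by auto
        then show ?thesis using g(3) s by force
      qed
    qed
  qed
qed

theorem lemma3p10:
  fixes \<Omega>m \<Omega>p :: "(real \<times> real) set"
  assumes "concave_toric_region \<Omega>m" and "concave_toric_region \<Omega>p"
    and "\<And>a b :: nat. a > 0 \<Longrightarrow> b > 0 \<Longrightarrow> coprime a b \<Longrightarrow>
           omega_action \<Omega>m a b \<le> omega_action \<Omega>p a b"
  shows "\<Omega>m \<subseteq> \<Omega>p"
proof
  note cm = assms(1) and cp = assms(2) and H = assms(3)
  fix p assume pm: "p \<in> \<Omega>m"
  show "p \<in> \<Omega>p"
  proof (rule ccontr)
    assume pn: "p \<notin> \<Omega>p"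
    have trm: "toric_region \<Omega>m" and trp: "toric_region \<Omega>p"
      using cm cp by (auto simp: concave_toric_region_def)
    have pQ: "p \<in> quadrant" using trm pm by (auto simp: toric_region_def)
    obtain x y where pxy: "p = (x, y)" by (cases p)
    have xy: "x \<ge> 0" "y \<ge> 0" using pQ by (auto simp: pxy quadrant_def)
    obtain a b \<gamma> where a: "a > 0" and b: "b > 0" and g: "path \<gamma>"
        "pathstart \<gamma> = (a, 0)" "pathfinish \<gamma> = (0, b)"
        "\<forall>t\<in>{0<..<1}. fst (\<gamma> t) > 0 \<and> snd (\<gamma> t) > 0"
        "frontier \<Omega>m = closed_segment (0,0) (a,0) \<union> closed_segment (0,0) (0,b) \<union> path_image \<gamma>"
      using trm unfolding toric_region_def by blast
    have clm: "closed \<Omega>m" using trm by (auto simp: toric_region_def compact_imp_closed)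
    have pim: "path_image \<gamma> \<subseteq> \<Omega>m"
      using g(5) frontier_subset_closed[OF clm] by blast
    consider "x > 0" "y > 0" | "x = 0" "y = 0" | "x > 0" "y = 0" | "x = 0" "y > 0"
      using xy by linarith
    then show False
    proof cases
      case 1 then show False using main_open[OF cm cp H pm] pn by (simp add: pxy)
    next
      case 2
      obtain e where e: "e > 0" "ball (0,0) e \<inter> quadrant \<subseteq> \<Omega>p"
        using trp unfolding toric_region_def by blast
      have "(0::real, 0::real) \<in> ball (0,0) e \<inter> quadrant" using e by (simp add: quadrant_def)
      then show False using e pn 2 pxy by blast
    next
      case 3
      have "x \<le> a" using axis_x[OF trm a b g(2-5)] pm 3 by (simp add: pxy)
      have "p + (a - x, 0) \<notin> \<Omega>p" by (rule upset[OF cp pQ pn]) (use \<open>x \<le> a\<close> in auto)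
      then have "\<gamma> 0 \<notin> \<Omega>p" using g(2) 3 by (simp add: pxy pathstart_def)
      then show False using near_end[OF cm cp H g(1) g(4) pim] by blast
    next
      case 4
      have "y \<le> b" using axis_y[OF trm a b g(2-5)] pm 4 by (simp add: pxy)
      have "p + (0, b - y) \<notin> \<Omega>p" by (rule upset[OF cp pQ pn]) (use \<open>y \<le> b\<close> in auto)
      then have "(reversepath \<gamma>) 0 \<notin> \<Omega>p" using g(3) 4 by (simp add: pxy pathfinish_def reversepath_def)
      moreover have "path (reversepath \<gamma>)" using g(1) by simp
      moreover have "\<forall>t\<in>{0<..<1}. fst (reversepath \<gamma> t) > 0 \<and> snd (reversepath \<gamma> t) > 0"
        using g(4) by (auto simp: reversepath_def)
      moreover have "path_image (reversepath \<gamma>) \<subseteq> \<Omega>m" using pim by simp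
      ultimately show False using near_end[OF cm cp H] by blast
    qed
  qed
qed

end
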